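(* Let $G$ be a graph and $Y$ a minimal blocking set of $G$. Then: (i) $Y$ contains no vertex that belongs to every minimum vertex cover of $G$; (ii) if $Y$ contains a vertex that belongs to no minimum vertex cover of $G$, then $|Y|=1$; (iii) $Y$ is contained in a single connected component of $G$; (iv) $\mathrm{OPT}(G-Y)+|Y|=\mathrm{OPT}(G)+1$.
   Context: $\mathrm{OPT}(G)$ is the minimum vertex cover size; a minimum vertex cover is one of size $\mathrm{OPT}(G)$. $Y\subseteq V(G)$ is a blocking set of $G$ if no minimum vertex cover of $G$ contains $Y$; it is minimal if no proper subset of $Y$ is a blocking set. *)

theory Defs
  imports Main
begin

definition graph :: "'a set \<Rightarrow> 'a set set \<Rightarrow> bool" where
  "graph V E \<longleftrightarrow> finite V \<and> (\<forall>e\<in>E. \<exists>u v. e = {u, v} \<and> u \<noteq> v \<and> u \<in> V \<and> v \<in> V)"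

definition vertex_cover :: "'a set \<Rightarrow> 'a set set \<Rightarrow> 'a set \<Rightarrow> bool" where
  "vertex_cover V E C \<longleftrightarrow> C \<subseteq> V \<and> (\<forall>e\<in>E. e \<inter> C \<noteq> {})"

definition OPT :: "'a set \<Rightarrow> 'a set set \<Rightarrow> nat" where
  "OPT V E = Min (card ` {C. vertex_cover V E C})"

definition min_vertex_cover :: "'a set \<Rightarrow> 'a set set \<Rightarrow> 'a set \<Rightarrow> bool" where
  "min_vertex_cover V E C \<longleftrightarrow> vertex_cover V E C \<and> card C = OPT V E"

definition blocking_set :: "'a set \<Rightarrow> 'a set set \<Rightarrow> 'a set \<Rightarrow> bool" where
  "blocking_set V E Y \<longleftrightarrow> Y \<subseteq> V \<and> \<not> (\<exists>C. min_vertex_cover V E C \<and> Y \<subseteq> C)"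

definition minimal_blocking_set :: "'a set \<Rightarrow> 'a set set \<Rightarrow> 'a set \<Rightarrow> bool" where
  "minimal_blocking_set V E Y \<longleftrightarrow> blocking_set V E Y \<and> (\<forall>Y'. Y' \<subset> Y \<longrightarrow> \<not> blocking_set V E Y')"

text \<open>Edge set of G - Y (vertex set is V - Y).\<close>
definition del_edges :: "'a set set \<Rightarrow> 'a set \<Rightarrow> 'a set set" where
  "del_edges E Y = {e \<in> E. e \<inter> Y = {}}"

definition connected_in :: "'a set set \<Rightarrow> 'a \<Rightarrow> 'a \<Rightarrow> bool" where
  "connected_in E u v \<longleftrightarrow> (\<lambda>x y. {x, y} \<in> E)\<^sup>*\<^sup>* u v"

end

theory Submission
  imports Defs
begin

lemma opt_facts:
  assumes "finite V" and ev: "\<And>e. e \<in> E \<Longrightarrow> e \<inter> V \<noteq> {}"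
  shows "vertex_cover V E C \<Longrightarrow> OPT V E \<le> card C"
    and "\<exists>C. min_vertex_cover V E C"
proof -
  have fin: "finite (card ` {C. vertex_cover V E C})"
    by (rule finite_subset[of _ "card ` Pow V"]) (auto simp: vertex_cover_def assms)
  have ne: "card ` {C. vertex_cover V E C} \<noteq> {}"
  proof -
    have "vertex_cover V E V" unfolding vertex_cover_def
      using ev by auto
    then show ?thesis by blast
  qed
  show "vertex_cover V E C \<Longrightarrow> OPT V E \<le> card C"
    unfolding OPT_def using fin by (simp add: Min_le)
  have "OPT V E \<in> card ` {C. vertex_cover V E C}"
    unfolding OPT_def using fin ne by (rule Min_in)
  then show "\<exists>C. min_vertex_cover V E C"
    unfolding min_vertex_cover_def by auto
qed

theorem mainTheorem11:
  fixes V :: "'a set" and E :: "'a set set" and Y :: "'a set"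
  assumes "graph V E"
    and "minimal_blocking_set V E Y"
  shows "(\<forall>v\<in>Y. \<not> (\<forall>C. min_vertex_cover V E C \<longrightarrow> v \<in> C))
    \<and> ((\<exists>v\<in>Y. \<forall>C. min_vertex_cover V E C \<longrightarrow> v \<notin> C) \<longrightarrow> card Y = 1)
    \<and> (\<exists>x\<in>V. \<forall>y\<in>Y. connected_in E x y)
    \<and> OPT (V - Y) (del_edges E Y) + card Y = OPT V E + 1"
proof -
  have finV: "finite V" using assms(1) by (simp add: graph_def)
  have YV: "Y \<subseteq> V" and noC: "\<And>C. min_vertex_cover V E C \<Longrightarrow> \<not> Y \<subseteq> C"
    using assms(2) by (auto simp: minimal_blocking_set_def blocking_set_def)
  have sub: "\<And>Y'. Y' \<subset> Y \<Longrightarrow> \<exists>C. min_vertex_cover V E C \<and> Y' \<subseteq> C"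
    using assms(2) YV by (auto simp: minimal_blocking_set_def blocking_set_def)
  have finY: "finite Y" using YV finV finite_subset by blast
  have edge: "\<And>e. e \<in> E \<Longrightarrow> \<exists>u v. e = {u, v} \<and> u \<noteq> v \<and> u \<in> V \<and> v \<in> V"
    using assms(1) by (simp add: graph_def)
  have ev1: "\<And>e. e \<in> E \<Longrightarrow> e \<inter> V \<noteq> {}" using edge by blast
  have ev2: "\<And>e. e \<in> del_edges E Y \<Longrightarrow> e \<inter> (V - Y) \<noteq> {}"
    using edge unfolding del_edges_def by blast
  have Yne: "Y \<noteq> {}" using opt_facts(2)[OF finV ev1] noC by blast
  have i: "\<forall>v\<in>Y. \<not> (\<forall>C. min_vertex_cover V E C \<longrightarrow> v \<in> C)"
  proof (intro ballI notI)
    fix v assume v: "v \<in> Y" and all: "\<forall>C. min_vertex_cover V E C \<longrightarrow> v \<in> C"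
    have "Y - {v} \<subset> Y" using v by auto
    then obtain C where "min_vertex_cover V E C" "Y - {v} \<subseteq> C" using sub by blast
    with all noC show False by blast
  qed
  have ii: "(\<exists>v\<in>Y. \<forall>C. min_vertex_cover V E C \<longrightarrow> v \<notin> C) \<longrightarrow> card Y = 1"
  proof
    assume "\<exists>v\<in>Y. \<forall>C. min_vertex_cover V E C \<longrightarrow> v \<notin> C"
    then obtain v where v: "v \<in> Y" and nv: "\<forall>C. min_vertex_cover V E C \<longrightarrow> v \<notin> C" by blast
    have "Y = {v}"
    proof (rule ccontr)
      assume "Y \<noteq> {v}"
      then have "{v} \<subset> Y" using v by auto
      then show False using sub nv by blast
    qed
    then show "card Y = 1" by simp
  qed
  obtain y0 where y0: "y0 \<in> Y" using Yne by blast
  define K where "K = {v. connected_in E y0 v}"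
  have closed: "\<And>e. e \<in> E \<Longrightarrow> e \<subseteq> K \<or> e \<inter> K = {}"
  proof -
    fix e assume e: "e \<in> E"
    then obtain u v where uv: "e = {u, v}" using edge by blast
    have "u \<in> K \<Longrightarrow> v \<in> K" using e uv unfolding K_def connected_in_def
      by (auto intro: rtranclp.rtrancl_into_rtrancl)
    moreover have "v \<in> K \<Longrightarrow> u \<in> K" using e uv unfolding K_def connected_in_def
      by (auto intro: rtranclp.rtrancl_into_rtrancl simp: insert_commute)
    ultimately show "e \<subseteq> K \<or> e \<inter> K = {}" using uv by auto
  qed
  have iii: "\<exists>x\<in>V. \<forall>y\<in>Y. connected_in E x y"
  proof (cases "Y \<subseteq> K")
    case True
    then show ?thesis using y0 YV unfolding K_def by auto
  next
    case False
    have y0K: "y0 \<in> K" unfolding K_def connected_in_def by simp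
    have "Y \<inter> K \<subset> Y" using False by auto
    then obtain C1 where C1: "min_vertex_cover V E C1" "Y \<inter> K \<subseteq> C1" using sub by blast
    have "Y - K \<subset> Y" using y0 y0K by auto
    then obtain C2 where C2: "min_vertex_cover V E C2" "Y - K \<subseteq> C2" using sub by blast
    define C where "C = (C1 \<inter> K) \<union> (C2 - K)"
    define D where "D = (C2 \<inter> K) \<union> (C1 - K)"
    have vc1: "vertex_cover V E C1" "card C1 = OPT V E" using C1 by (auto simp: min_vertex_cover_def)
    have vc2: "vertex_cover V E C2" "card C2 = OPT V E" using C2 by (auto simp: min_vertex_cover_def)
    have f1: "finite C1" "finite C2" using vc1 vc2 finV finite_subset
      by (auto simp: vertex_cover_def)
    have vcC: "vertex_cover V E C"
      unfolding vertex_cover_def C_def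
    proof (intro conjI ballI)
      show "C1 \<inter> K \<union> (C2 - K) \<subseteq> V" using vc1 vc2 by (auto simp: vertex_cover_def)
      fix e assume e: "e \<in> E"
      have a: "e \<inter> C1 \<noteq> {}" "e \<inter> C2 \<noteq> {}" using vc1 vc2 e by (auto simp: vertex_cover_def)
      show "e \<inter> (C1 \<inter> K \<union> (C2 - K)) \<noteq> {}" using closed[OF e] a by blast
    qed
    have vcD: "vertex_cover V E D"
      unfolding vertex_cover_def D_def
    proof (intro conjI ballI)
      show "C2 \<inter> K \<union> (C1 - K) \<subseteq> V" using vc1 vc2 by (auto simp: vertex_cover_def)
      fix e assume e: "e \<in> E"
      have a: "e \<inter> C1 \<noteq> {}" "e \<inter> C2 \<noteq> {}" using vc1 vc2 e by (auto simp: vertex_cover_def)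
      show "e \<inter> (C2 \<inter> K \<union> (C1 - K)) \<noteq> {}" using closed[OF e] a by blast
    qed
    have s1: "card C1 = card (C1 \<inter> K) + card (C1 - K)"
      using f1 by (metis card_Un_disjoint Int_Diff_Un Int_Diff_disjoint finite_Diff finite_Int)
    have s2: "card C2 = card (C2 \<inter> K) + card (C2 - K)"
      using f1 by (metis card_Un_disjoint Int_Diff_Un Int_Diff_disjoint finite_Diff finite_Int)
    have sC: "card C = card (C1 \<inter> K) + card (C2 - K)"
      unfolding C_def using f1 by (intro card_Un_disjoint) auto
    have sD: "card D = card (C2 \<inter> K) + card (C1 - K)"
      unfolding D_def using f1 by (intro card_Un_disjoint) auto
    have "OPT V E \<le> card C" "OPT V E \<le> card D"
      using opt_facts(1)[OF finV ev1] vcC vcD by auto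
    then have "card C = OPT V E" using s1 s2 sC sD vc1 vc2 by linarith
    then have "min_vertex_cover V E C" using vcC by (simp add: min_vertex_cover_def)
    moreover have "Y \<subseteq> C" using C1 C2 unfolding C_def by auto
    ultimately show ?thesis using noC by blast
  qed
  have iv: "OPT (V - Y) (del_edges E Y) + card Y = OPT V E + 1"
  proof -
    have finVY: "finite (V - Y)" using finV by simp
    obtain C' where C': "min_vertex_cover (V - Y) (del_edges E Y) C'"
      using opt_facts(2)[OF finVY ev2] by blast
    have vc': "vertex_cover (V - Y) (del_edges E Y) C'" "card C' = OPT (V - Y) (del_edges E Y)"
      using C' by (auto simp: min_vertex_cover_def)
    have fC': "finite C'" using vc' finVY finite_subset by (auto simp: vertex_cover_def)
    have vcU: "vertex_cover V E (C' \<union> Y)"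
      using vc' YV by (auto simp: vertex_cover_def del_edges_def)
    have cU: "card (C' \<union> Y) = card C' + card Y"
      using fC' finY vc' by (intro card_Un_disjoint) (auto simp: vertex_cover_def)
    have "\<not> min_vertex_cover V E (C' \<union> Y)" using noC by blast
    then have "card (C' \<union> Y) \<noteq> OPT V E" using vcU by (simp add: min_vertex_cover_def)
    then have ge: "OPT V E + 1 \<le> card C' + card Y"
      using opt_facts(1)[OF finV ev1 vcU] cU by linarith
    have "Y - {y0} \<subset> Y" using y0 by auto
    then obtain C where C: "min_vertex_cover V E C" "Y - {y0} \<subseteq> C" using sub by blast
    have vcC: "vertex_cover V E C" "card C = OPT V E" using C by (auto simp: min_vertex_cover_def)
    have fC: "finite C" using vcC finV finite_subset by (auto simp: vertex_cover_def)
    have y0C: "y0 \<notin> C" using C noC by blast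
    define D where "D = (C \<union> {y0}) - Y"
    have YC: "Y \<subseteq> C \<union> {y0}" using C by auto
    have cD: "card D = OPT V E + 1 - card Y"
      unfolding D_def using card_Diff_subset[OF finY YC] fC y0C vcC by simp
    have vcD: "vertex_cover (V - Y) (del_edges E Y) D"
      using vcC YV y0 unfolding D_def vertex_cover_def del_edges_def by blast
    have "card C' \<le> card D" using opt_facts(1)[OF finVY ev2 vcD] vc' by simp
    moreover have "card Y \<le> OPT V E + 1"
      using card_mono[OF _ YC] fC y0C vcC by simp
    ultimately show ?thesis using ge cD vc' by linarith
  qed
  show ?thesis using i ii iii iv by blast
qed

end
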